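(* Let $W=(w_{ij})\in\mathbb{R}^{n\times n}$ be a symmetric positive definite matrix, and define $\widetilde w_{ij}=w_{ij}+w_{ii}+w_{jj}$ for $i\ne j$. For $S\subseteq[n]$ let $$w(S)=\sum_{\{i,j\}\subseteq S,\ i\neq j} w_{ij}+\sum_{i\in S}w_{ii},\qquad \widetilde w(S)=\sum_{\{i,j\}\subseteq S,\ i\ne j}\widetilde w_{ij},$$ where the sums over $\{i,j\}$ range over unordered pairs of distinct elements. Then for every nonempty $S\subseteq[n]$, $$\frac{\widetilde w(S)}{w(S)}\le (|S|-1)\frac{\lambda_{\max}(W)}{\lambda_{\min}(W)},$$ where $\lambda_{\min}(W),\lambda_{\max}(W)$ are the minimum and maximum eigenvalues of $W$. *)

theory Defs
  imports "HOL-Analysis.Analysis"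
begin

text \<open>Matrices in R^{n x n} are rendered as real^'n^'n, with [n] = UNIV :: 'n set.\<close>

definition is_eigenvalue :: "real^'n^'n \<Rightarrow> real \<Rightarrow> bool" where
  "is_eigenvalue W l \<longleftrightarrow> (\<exists>v. v \<noteq> 0 \<and> W *v v = l *\<^sub>R v)"

definition lambda_max :: "real^'n^'n \<Rightarrow> real" where
  "lambda_max W = Max {l. is_eigenvalue W l}"

definition lambda_min :: "real^'n^'n \<Rightarrow> real" where
  "lambda_min W = Min {l. is_eigenvalue W l}"

definition symmetric_mat :: "real^'n^'n \<Rightarrow> bool" where
  "symmetric_mat W \<longleftrightarrow> transpose W = W"

definition pos_def :: "real^'n^'n \<Rightarrow> bool" where
  "pos_def W \<longleftrightarrow> (\<forall>x. x \<noteq> 0 \<longrightarrow> x \<bullet> (W *v x) > 0)"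

definition wt :: "real^'n^'n \<Rightarrow> 'n \<Rightarrow> 'n \<Rightarrow> real" where
  "wt W i j = W$i$j + W$i$i + W$j$j"

text \<open>Sums over unordered pairs {i,j} of distinct elements of S, written as half of the
  sum over ordered pairs (the summands are symmetric in i, j).\<close>
definition wS :: "real^'n^'n \<Rightarrow> 'n set \<Rightarrow> real" where
  "wS W S = (\<Sum>i\<in>S. \<Sum>j\<in>S - {i}. W$i$j) / 2 + (\<Sum>i\<in>S. W$i$i)"

definition wtS :: "real^'n^'n \<Rightarrow> 'n set \<Rightarrow> real" where
  "wtS W S = (\<Sum>i\<in>S. \<Sum>j\<in>S - {i}. wt W i j) / 2"

end

theory Submission imports Defs "HOL-Analysis.Cartesian_Space" begin

lemma sym_inner:
  fixes W :: "real^'n^'n"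
  assumes "symmetric_mat W"
  shows "x \<bullet> (W *v y) = (W *v x) \<bullet> y"
proof -
  have "x \<bullet> (W *v y) = (x v* W) \<bullet> y" by (simp add: dot_lmul_matrix)
  also have "x v* W = transpose W *v x" by simp
  also have "\<dots> = W *v x" using assms by (simp add: symmetric_mat_def)
  finally show ?thesis .
qed

lemma quad_scale:
  fixes W :: "real^'n^'n"
  shows "(c *\<^sub>R x) \<bullet> (W *v (c *\<^sub>R x)) = c^2 * (x \<bullet> (W *v x))"
  by (simp add: matrix_vector_mult_scaleR power2_eq_square)

lemma top_eig:
  fixes W :: "real^'n^'n"
  assumes sym: "symmetric_mat W"
  shows "\<exists>v \<mu>. v \<noteq> 0 \<and> W *v v = \<mu> *\<^sub>R v \<and> (\<forall>x. x \<bullet> (W *v x) \<le> \<mu> * (x \<bullet> x))"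
proof -
  let ?q = "\<lambda>x. x \<bullet> (W *v x)"
  have cont: "continuous_on (sphere 0 1) ?q"
    by (intro continuous_intros linear_continuous_on matrix_vector_mul_linear_gen linear_linear)
  have ne: "sphere (0::real^'n) 1 \<noteq> {}"
    by (simp)
  obtain v where v: "v \<in> sphere 0 1" and vmax: "\<And>y. y \<in> sphere 0 1 \<Longrightarrow> ?q y \<le> ?q v"
    using continuous_attains_sup[OF compact_sphere ne cont] by blast
  define \<mu> where "\<mu> = ?q v"
  have nv: "norm v = 1" using v by simp
  have vv: "v \<bullet> v = 1" using nv by (simp add: dot_square_norm)
  have bound: "?q x \<le> \<mu> * (x \<bullet> x)" for x
  proof (cases "x = 0")
    case True then show ?thesis by simp
  next
    case False
    define u where "u = (1 / norm x) *\<^sub>R x"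
    have u: "u \<in> sphere 0 1" using False by (simp add: u_def)
    have x: "x = norm x *\<^sub>R u" using False by (simp add: u_def)
    have "?q x = (norm x)^2 * ?q u" using quad_scale[of "norm x" u W] x by metis
    also have "\<dots> \<le> (norm x)^2 * \<mu>" using vmax[OF u] by (simp add: \<mu>_def mult_left_mono)
    finally show ?thesis by (simp add: dot_square_norm mult.commute)
  qed
  define z where "z = \<mu> *\<^sub>R v - W *v v"
  define c where "c = z \<bullet> z"
  define d where "d = \<mu> * (z \<bullet> z) - ?q z"
  have d0: "d \<ge> 0" using bound[of z] by (simp add: d_def)
  have key: "2 * t * c \<le> t^2 * d" for t
  proof -
    define A where "A = z \<bullet> (W *v v)"
    define B where "B = z \<bullet> v"
    have s1: "v \<bullet> (W *v z) = A" using sym_inner[OF sym, of v z] by (simp add: A_def inner_commute)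
    have s2: "v \<bullet> z = B" by (simp add: B_def inner_commute)
    have "?q (v - t *\<^sub>R z) \<le> \<mu> * ((v - t *\<^sub>R z) \<bullet> (v - t *\<^sub>R z))" by (rule bound)
    moreover have "?q (v - t *\<^sub>R z) = \<mu> - 2 * t * A + t^2 * ?q z"
      using s1 by (simp add: \<mu>_def A_def matrix_vector_mult_diff_distrib matrix_vector_mult_scaleR inner_diff_left inner_diff_right algebra_simps power2_eq_square)
    moreover have "(v - t *\<^sub>R z) \<bullet> (v - t *\<^sub>R z) = 1 - 2 * t * B + t^2 * (z \<bullet> z)"
      using vv s2 by (simp add: B_def inner_diff_left inner_diff_right algebra_simps power2_eq_square)
    moreover have "c = \<mu> * B - A"
    proof -
      have "z \<bullet> (\<mu> *\<^sub>R v - W *v v) = \<mu> * B - A" by (simp add: inner_diff_right A_def B_def)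
      then show ?thesis by (simp add: c_def z_def[symmetric])
    qed
    moreover have "t^2 * d - 2 * t * c = \<mu> * (1 - 2 * t * B + t^2 * (z \<bullet> z)) - (\<mu> - 2 * t * A + t^2 * ?q z)"
      if "c = \<mu> * B - A" unfolding that d_def by (simp add: algebra_simps)
    ultimately show ?thesis by (metis diff_ge_0_iff_ge)
  qed
  have "c = 0"
  proof (rule ccontr)
    assume "c \<noteq> 0"
    then have cp: "c > 0" using c_def by (simp add: order_le_neq_trans)
    define t where "t = c / (d + 1)"
    have tp: "t > 0" using cp d0 by (simp add: t_def)
    have "2 * t * c \<le> t^2 * d" by (rule key)
    then have "2 * c \<le> t * d" using tp by (simp add: power2_eq_square)
    moreover have "t * d < c" using cp d0 by (simp add: t_def field_simps)
    ultimately show False using cp by linarith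
  qed
  then have "z = 0" by (simp add: c_def)
  then have "W *v v = \<mu> *\<^sub>R v" by (simp add: z_def)
  moreover have "v \<noteq> 0" using nv by auto
  ultimately show ?thesis using bound by blast
qed

lemma neg_mv: "(- W) *v x = - (W *v (x::real^'n))"
  by (simp add: vec_eq_iff matrix_vector_mult_def sum_negf)

lemma sym_neg: "symmetric_mat W \<Longrightarrow> symmetric_mat (- W)"
  by (simp add: symmetric_mat_def vec_eq_iff transpose_def)

lemma eig_finite:
  fixes W :: "real^'n^'n"
  assumes sym: "symmetric_mat W"
  shows "finite {l. is_eigenvalue W l}"
proof -
  define E where "E = {l. is_eigenvalue W l}"
  define f where "f l = (SOME v. v \<noteq> 0 \<and> W *v v = l *\<^sub>R v)" for l
  have fE: "f l \<noteq> 0 \<and> W *v f l = l *\<^sub>R f l" if "l \<in> E" for l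
  proof -
    from that have "\<exists>v. v \<noteq> 0 \<and> W *v v = l *\<^sub>R v" by (simp add: E_def is_eigenvalue_def)
    then show ?thesis unfolding f_def by (rule someI_ex)
  qed
  have inj: "inj_on f E"
  proof (rule inj_onI)
    fix l l' assume "l \<in> E" "l' \<in> E" "f l = f l'"
    then have "l *\<^sub>R f l = l' *\<^sub>R f l" "f l \<noteq> 0" using fE by metis+
    then show "l = l'" by (simp add: scaleR_cancel_right)
  qed
  have orth: "pairwise orthogonal (f ` E)"
  proof (clarsimp simp: pairwise_def)
    fix l l' assume l: "l \<in> E" and l': "l' \<in> E" and ne: "f l \<noteq> f l'"
    then have "l \<noteq> l'" by auto
    have "l * (f l \<bullet> f l') = (W *v f l) \<bullet> f l'" using fE[OF l] by simp
    also have "\<dots> = f l \<bullet> (W *v f l')" using sym_inner[OF sym] by simp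
    also have "\<dots> = l' * (f l \<bullet> f l')" using fE[OF l'] by simp
    finally have "(l - l') * (f l \<bullet> f l') = 0" by (simp add: algebra_simps)
    then show "orthogonal (f l) (f l')" using \<open>l \<noteq> l'\<close> by (simp add: orthogonal_def)
  qed
  have "0 \<notin> f ` E" using fE by auto
  then have "independent (f ` E)" using orth pairwise_orthogonal_independent by blast
  then have "finite (f ` E)" using independent_bound by blast
  then show ?thesis using inj finite_imageD unfolding E_def by blast
qed

lemma eig_rayleigh:
  fixes W :: "real^'n^'n"
  assumes "W *v u = l *\<^sub>R u"
  shows "u \<bullet> (W *v u) = l * (u \<bullet> u)"
  using assms by simp

lemma spec_bounds:
  fixes W :: "real^'n^'n"
  assumes sym: "symmetric_mat W"
  shows "is_eigenvalue W (lambda_max W)" "is_eigenvalue W (lambda_min W)"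
    "\<And>x. x \<bullet> (W *v x) \<le> lambda_max W * (x \<bullet> x)"
    "\<And>x. lambda_min W * (x \<bullet> x) \<le> x \<bullet> (W *v x)"
proof -
  have fin: "finite {l. is_eigenvalue W l}" by (rule eig_finite[OF sym])
  obtain v \<mu> where v: "v \<noteq> 0" "W *v v = \<mu> *\<^sub>R v" and b: "\<And>x. x \<bullet> (W *v x) \<le> \<mu> * (x \<bullet> x)"
    using top_eig[OF sym] by blast
  have ev: "is_eigenvalue W \<mu>" using v by (auto simp: is_eigenvalue_def)
  have "l \<le> \<mu>" if el: "is_eigenvalue W l" for l
  proof -
    obtain u where u: "u \<noteq> 0" "W *v u = l *\<^sub>R u" using el unfolding is_eigenvalue_def by metis
    have "l * (u \<bullet> u) \<le> \<mu> * (u \<bullet> u)" using b[of u] eig_rayleigh[OF u(2)] by simp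
    moreover have "u \<bullet> u > 0" using u by simp
    ultimately show ?thesis by simp
  qed
  then have M: "lambda_max W = \<mu>" unfolding lambda_max_def using fin ev
    by (intro Max_eqI) auto
  show "is_eigenvalue W (lambda_max W)" using M ev by simp
  show "\<And>x. x \<bullet> (W *v x) \<le> lambda_max W * (x \<bullet> x)" using M b by simp
  obtain v' \<mu>' where v': "v' \<noteq> 0" "(-W) *v v' = \<mu>' *\<^sub>R v'" and b': "\<And>x. x \<bullet> ((-W) *v x) \<le> \<mu>' * (x \<bullet> x)"
    using top_eig[OF sym_neg[OF sym]] by blast
  have v'2: "W *v v' = (-\<mu>') *\<^sub>R v'" using v'(2) by (simp add: neg_mv) (metis minus_minus)
  have ev': "is_eigenvalue W (-\<mu>')" using v'(1) v'2 by (auto simp: is_eigenvalue_def)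
  have b'2: "-\<mu>' * (x \<bullet> x) \<le> x \<bullet> (W *v x)" for x using b'[of x] by (simp add: neg_mv)
  have "-\<mu>' \<le> l" if el: "is_eigenvalue W l" for l
  proof -
    obtain u where u: "u \<noteq> 0" "W *v u = l *\<^sub>R u" using el unfolding is_eigenvalue_def by metis
    have "-\<mu>' * (u \<bullet> u) \<le> l * (u \<bullet> u)" using b'2[of u] eig_rayleigh[OF u(2)] by simp
    moreover have "u \<bullet> u > 0" using u by simp
    ultimately show ?thesis by (meson mult_right_le_imp_le)
  qed
  then have m: "lambda_min W = -\<mu>'" unfolding lambda_min_def using fin ev'
    by (intro Min_eqI) auto
  show "is_eigenvalue W (lambda_min W)" using m ev' by simp
  show "\<And>x. lambda_min W * (x \<bullet> x) \<le> x \<bullet> (W *v x)" using m b'2 by simp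
qed

lemma final_ineq:
  fixes a t K m M :: real
  assumes K: "K \<ge> 2" and m: "m > 0" and Mm: "M \<ge> m" and a: "a \<ge> K * m" and t0: "t \<ge> 0"
    and tM: "t \<le> K * M"
  shows "a + (2*K - 3) * t \<le> (K - 1) * (M / m) * (a + t)"
proof -
  define r where "r = M / m"
  have r1: "r \<ge> 1" using Mm m by (simp add: r_def)
  have Mr: "M = r * m" using m by (simp add: r_def)
  have "(K - 1) * r \<ge> (K - 1) * 1" using r1 K by (intro mult_left_mono) auto
  then have "(K - 1) * r \<ge> K - 1" by simp
  then have c1: "(K - 1) * r - 1 \<ge> 0" using K by linarith
  have a0: "a \<ge> 0" using a K m by (meson mult_nonneg_nonneg order.trans less_imp_le le_numeral_extra(1) order.trans[of 0 2 K] zero_le_numeral)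
  have eq: "(K - 1) * r * (a + t) - (a + (2*K - 3) * t) = ((K - 1) * r - 1) * a + ((K - 1) * r - (2*K - 3)) * t"
    by (simp add: algebra_simps)
  have "((K - 1) * r - 1) * a + ((K - 1) * r - (2*K - 3)) * t \<ge> 0"
  proof (cases "(K - 1) * r - (2*K - 3) \<ge> 0")
    case True
    then show ?thesis using c1 a0 t0 by (intro add_nonneg_nonneg mult_nonneg_nonneg) auto
  next
    case False
    have "((K - 1) * r - 1) * a \<ge> ((K - 1) * r - 1) * (K * m)" using c1 a by (rule mult_left_mono[rotated])
    moreover have "((K - 1) * r - (2*K - 3)) * t \<ge> ((K - 1) * r - (2*K - 3)) * (K * (r * m))"
      using False tM Mr by (intro mult_left_mono_neg) auto
    moreover have "((K - 1) * r - 1) * (K * m) + ((K - 1) * r - (2*K - 3)) * (K * (r * m)) = K * m * ((r - 1) * ((K - 1) * r + 1))"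
      by (simp add: algebra_simps)
    moreover have "K * m * ((r - 1) * ((K - 1) * r + 1)) \<ge> 0"
      using K m r1 by (intro mult_nonneg_nonneg) auto
    ultimately show ?thesis by linarith
  qed
  then show ?thesis using eq by (simp add: r_def)
qed

theorem lemma6:
  fixes W :: "real^'n^'n" and S :: "'n set"
  assumes "symmetric_mat W" and "pos_def W" and "S \<noteq> {}"
  shows "wtS W S / wS W S \<le> (real (card S) - 1) * (lambda_max W / lambda_min W)"
proof -
  note sb = spec_bounds[OF assms(1)]
  define M where "M = lambda_max W"
  define m where "m = lambda_min W"
  define K where "K = real (card S)"
  define e :: "real^'n" where "e = (\<chi> i. if i \<in> S then 1 else 0)"
  define a where "a = (\<Sum>i\<in>S. \<Sum>j\<in>S. W$i$j)"
  define t where "t = (\<Sum>i\<in>S. W$i$i)"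
  have fin: "finite S" by simp
  have F1: "e \<bullet> (W *v e) = a"
  proof -
    have "e \<bullet> (W *v e) = (\<Sum>i\<in>UNIV. (if i \<in> S then 1 else 0) * (\<Sum>j\<in>UNIV. W$i$j * (if j \<in> S then 1 else 0)))"
      by (simp add: e_def inner_vec_def matrix_vector_mult_def)
    also have "\<dots> = (\<Sum>i\<in>UNIV. if i \<in> S then (\<Sum>j\<in>UNIV. if j \<in> S then W$i$j else 0) else 0)"
      by (intro sum.cong refl) (auto intro: sum.cong)
    also have "\<dots> = a" by (simp add: sum.If_cases a_def Int_absorb1)
    finally show ?thesis .
  qed
  have F2: "e \<bullet> e = K"
    by (simp add: e_def K_def inner_vec_def if_distrib sum.If_cases cong: if_cong)
  have F3: "W$i$i = axis i 1 \<bullet> (W *v axis i 1)" for i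
    by (simp add: inner_axis' matrix_vector_mult_basis column_def)
  have m0: "m > 0"
  proof -
    obtain v where v: "v \<noteq> 0" "W *v v = m *\<^sub>R v" using sb(2) unfolding is_eigenvalue_def m_def by metis
    have "v \<bullet> (W *v v) > 0" using assms(2) v(1) by (simp add: pos_def_def)
    then have "m * (v \<bullet> v) > 0" using v(2) by simp
    moreover have "v \<bullet> v > 0" using v(1) by simp
    ultimately show ?thesis by (simp add: zero_less_mult_iff)
  qed
  have Wii: "m \<le> W$i$i \<and> W$i$i \<le> M" for i
    using sb(3)[of "axis i 1"] sb(4)[of "axis i 1"] F3[of i] by (simp add: m_def M_def inner_axis)
  have Mm: "m \<le> M" using Wii by (meson order.trans)
  have aK: "a \<ge> K * m" using sb(4)[of e] F1 F2 by (simp add: m_def mult.commute)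
  have tK: "t \<le> K * M" unfolding t_def K_def
    using sum_bounded_above[of S "\<lambda>i. W$i$i" M] Wii by (simp add: mult.commute)
  have t0: "t \<ge> 0" unfolding t_def using Wii m0 by (intro sum_nonneg) (meson less_imp_le order.trans)
  have K1: "K \<ge> 1" using assms(3) fin by (simp add: K_def Suc_le_eq card_gt_0_iff)
  have offd: "(\<Sum>i\<in>S. \<Sum>j\<in>S - {i}. W$i$j) = a - t"
  proof -
    have "(\<Sum>j\<in>S. W$i$j) = W$i$i + (\<Sum>j\<in>S - {i}. W$i$j)" if "i \<in> S" for i
      using that fin by (simp add: sum.remove)
    then have "a = (\<Sum>i\<in>S. W$i$i + (\<Sum>j\<in>S - {i}. W$i$j))" unfolding a_def by (intro sum.cong) auto
    then show ?thesis by (simp add: sum.distrib t_def)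
  qed
  have wS_eq: "wS W S = (a + t) / 2" unfolding wS_def offd t_def[symmetric] by (simp add: field_simps)
  have wt_eq: "wtS W S = (a + (2*K - 3) * t) / 2"
  proof -
    have s1: "(\<Sum>j\<in>S - {i}. W$i$i) = (K - 1) * W$i$i" if "i \<in> S" for i
    proof -
      have "card S \<ge> 1" using assms(3) fin by (simp add: Suc_le_eq card_gt_0_iff)
      then show ?thesis using that fin by (simp add: K_def card_Diff_singleton of_nat_diff)
    qed
    have s2: "(\<Sum>j\<in>S - {i}. W$j$j) = t - W$i$i" if "i \<in> S" for i
      using that fin by (simp add: t_def sum_diff1)
    have "(\<Sum>i\<in>S. \<Sum>j\<in>S - {i}. wt W i j) = (\<Sum>i\<in>S. (\<Sum>j\<in>S - {i}. W$i$j) + (K - 1) * W$i$i + (t - W$i$i))"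
      unfolding wt_def using s1 s2 by (intro sum.cong) (auto simp: sum.distrib)
    also have "\<dots> = (a - t) + (K - 1) * t + (K * t - t)"
      by (simp add: sum.distrib offd sum_distrib_left[symmetric] t_def[symmetric] K_def sum_subtractf)
    finally show ?thesis unfolding wtS_def by (simp add: algebra_simps)
  qed
  have apos: "a > 0"
  proof -
    have "e \<noteq> 0" using assms(3) by (auto simp: e_def vec_eq_iff)
    then show ?thesis using assms(2) F1 unfolding pos_def_def by metis
  qed
  have den: "(a + t) / 2 > 0" using apos t0 by simp
  show ?thesis
  proof (cases "K = 1")
    case True
    then obtain x where "S = {x}" using K_def by (metis card_1_singletonE of_nat_eq_1_iff)
    then have "a = t" by (simp add: a_def t_def)
    then show ?thesis unfolding wt_eq wS_eq K_def[symmetric] using True by simp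
  next
    case False
    have "card S \<noteq> 1" using False K_def by simp
    moreover have "card S \<ge> 1" using assms(3) fin by (simp add: Suc_le_eq card_gt_0_iff)
    ultimately have "card S \<ge> 2" by simp
    then have K2: "K \<ge> 2" unfolding K_def by simp
    have "a + (2*K - 3) * t \<le> (K - 1) * (M / m) * (a + t)"
      by (rule final_ineq[OF K2 m0 Mm aK t0 tK])
    then have "(a + (2*K - 3) * t) / (a + t) \<le> (K - 1) * (M / m)"
      using den by (simp add: pos_divide_le_eq)
    moreover have "(a + (2*K - 3) * t) / 2 / ((a + t) / 2) = (a + (2*K - 3) * t) / (a + t)" using den by (simp add: field_simps)
    ultimately show ?thesis unfolding wt_eq wS_eq K_def[symmetric] M_def[symmetric] m_def[symmetric]
      by simp
  qed
qed

end
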